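(* For each $n\ge1$ let $k_n\in\mathbb{N}$, let $X_{n,1},\dots,X_{n,k_n}$ be independent centred random variables with $\mathbb{V}(X_{n,i})=1$, and let $a_{n,i}\ge 0$ be reals with $\sum_{i=1}^{k_n}a_{n,i}^2=1$. Set $X_n=\sum_{i=1}^{k_n}a_{n,i}X_{n,i}$. Suppose that for each fixed $i$, $X_{n,i}\to N(0,1)$ in distribution as $n\to\infty$ (along those $n$ with $k_n\ge i$), and that $$\lim_{k\to\infty}\sup_n\sum_{i=k}^{k_n}a_{n,i}^2=0$$ (empty sums being $0$). Then $X_n\to N(0,1)$ in distribution. *)

theory Defs
  imports "HOL-Probability.Probability"
begin

text \<open>Weak convergence (convergence in distribution) of a sequence of real distributions
  along the subsequence of indices in S, i.e. convergence of the cdfs at every continuity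
  point of the limit cdf, with n tending to infinity inside S.
  (If S is finite the filter is trivial and the condition is vacuous.)\<close>
definition weak_conv_m_within :: "(nat \<Rightarrow> real measure) \<Rightarrow> real measure \<Rightarrow> nat set \<Rightarrow> bool" where
  "weak_conv_m_within \<mu> N S \<equiv>
     \<forall>x. isCont (cdf N) x \<longrightarrow> ((\<lambda>n. cdf (\<mu> n) x) \<longlongrightarrow> cdf N x) (sequentially \<sqinter> principal S)"

end

theory Submission
  imports Defs
begin
lemma seq_principal_finite:
  assumes "finite (S::nat set)"
  shows "sequentially \<sqinter> principal S = bot"
proof -
  have "eventually (\<lambda>n. n \<notin> S) sequentially"
    using assms by (simp add: cofinite_eq_sequentially[symmetric] eventually_cofinite)
  then have "eventually (\<lambda>_. False) (sequentially \<sqinter> principal S)"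
    by (simp add: eventually_inf_principal)
  then show ?thesis by (simp add: eventually_False)
qed

lemma seq_principal_infinite:
  assumes "infinite (S::nat set)"
  shows "sequentially \<sqinter> principal S = filtermap (enumerate S) sequentially"
proof (rule filter_eq_iff[THEN iffD2], intro allI iffI)
  fix P
  assume "eventually P (sequentially \<sqinter> principal S)"
  then obtain N where N: "\<And>n. n \<ge> N \<Longrightarrow> n \<in> S \<Longrightarrow> P n"
    by (auto simp: eventually_inf_principal eventually_sequentially)
  have "P (enumerate S m)" if "m \<ge> N" for m
    using N[of "enumerate S m"] le_enumerate[OF assms, of m] that enumerate_in_set[OF assms] by simp
  then show "eventually P (filtermap (enumerate S) sequentially)"
    by (auto simp: eventually_filtermap eventually_sequentially)
next
  fix P
  assume "eventually P (filtermap (enumerate S) sequentially)"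
  then obtain M where M: "\<And>m. m \<ge> M \<Longrightarrow> P (enumerate S m)"
    by (auto simp: eventually_filtermap eventually_sequentially)
  have "P n" if h1: "n \<ge> enumerate S M" and h2: "n \<in> S" for n
  proof -
    obtain m where m: "enumerate S m = n" using enumerate_Ex[OF assms h2] by blast
    then have "m \<ge> M" using h1 assms by (metis enumerate_mono_le_iff)
    then show ?thesis using M m by blast
  qed
  then show "eventually P (sequentially \<sqinter> principal S)"
    by (auto simp: eventually_inf_principal eventually_sequentially)
qed

lemma within_char_conv:
  assumes "\<And>n. n \<in> S \<Longrightarrow> real_distribution (\<mu> n)" "real_distribution N" "weak_conv_m_within \<mu> N S"
  shows "((\<lambda>n. char (\<mu> n) s) \<longlongrightarrow> char N s) (sequentially \<sqinter> principal S)"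
proof (cases "finite S")
  case True
  then show ?thesis by (simp add: seq_principal_finite)
next
  case False
  note F = seq_principal_infinite[OF False]
  have "weak_conv_m (\<lambda>m. \<mu> (enumerate S m)) N"
    using assms(3) unfolding weak_conv_m_def weak_conv_def weak_conv_m_within_def F filterlim_filtermap
    by blast
  then have "(\<lambda>m. char (\<mu> (enumerate S m)) s) \<longlonglongrightarrow> char N s"
    by (intro levy_continuity1 assms enumerate_in_set False)
  then show ?thesis by (simp add: F filterlim_filtermap)
qed
lemma abs_le_half_sq: "\<bar>x::real\<bar> \<le> (1 + x^2)/2"
proof -
  have "0 \<le> (\<bar>x\<bar> - 1)^2" by simp
  then show ?thesis by (simp add: power2_eq_square algebra_simps abs_mult_self_eq)
qed

lemma char_quad_bound:
  assumes "real_distribution \<mu>" "integrable \<mu> (\<lambda>x. x)" "integrable \<mu> (\<lambda>x. x^2)"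
    "(\<integral>x. x \<partial>\<mu>) = 0" "(\<integral>x. x^2 \<partial>\<mu>) = 1"
  shows "cmod (char \<mu> s - (1 - s^2/2)) \<le> s^2"
proof -
  interpret real_distribution \<mu> by fact
  have im: "integrable \<mu> (\<lambda>x. x^k)" if "k \<le> 2" for k
  proof -
    have "k = 0 \<or> k = 1 \<or> k = 2" using that by auto
    then show ?thesis using assms by auto
  qed
  have "cmod (char \<mu> s - (\<Sum>k \<le> 2. ((\<i> * s)^k / fact k) * expectation (\<lambda>x. x^k))) \<le>
    (2*\<bar>s\<bar>^2 / fact 2) * expectation (\<lambda>x. \<bar>x\<bar>^2)"
    by (rule char_approx1) (rule im)
  moreover have "(\<Sum>k \<le> 2. ((\<i> * s)^k / fact k) * expectation (\<lambda>x. x^k)) = 1 - s^2/2"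
    using assms(4,5) prob_space by (simp add: numeral_2_eq_2 atMost_Suc power2_eq_square algebra_simps)
  moreover have "expectation (\<lambda>x. \<bar>x\<bar>^2) = 1" using assms(5) by simp
  ultimately show ?thesis by (simp add: numeral_2_eq_2)
qed

lemma char_lipschitz:
  assumes "real_distribution \<mu>" "integrable \<mu> (\<lambda>x. x^2)" "(\<integral>x. x^2 \<partial>\<mu>) = 1"
  shows "cmod (char \<mu> s - char \<mu> s') \<le> \<bar>s - s'\<bar>"
proof -
  interpret real_distribution \<mu> by fact
  have ie: "integrable \<mu> (\<lambda>x. iexp (r * x))" for r
    by (intro integrable_const_bound[where B=1]) auto
  have "char \<mu> s - char \<mu> s' = (CLINT x|\<mu>. iexp (s*x) - iexp (s'*x))"
    unfolding char_def by (rule Bochner_Integration.integral_diff[symmetric]) (rule ie)+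
  also have "cmod \<dots> \<le> (\<integral>x. cmod (iexp (s*x) - iexp (s'*x)) \<partial>\<mu>)"
    by (rule integral_norm_bound)
  also have "\<dots> \<le> (\<integral>x. \<bar>s - s'\<bar> * ((1 + x^2)/2) \<partial>\<mu>)"
  proof (rule integral_mono)
    show "integrable \<mu> (\<lambda>x. cmod (iexp (s*x) - iexp (s'*x)))"
      by (intro integrable_norm Bochner_Integration.integrable_diff ie)
    show "integrable \<mu> (\<lambda>x. \<bar>s - s'\<bar> * ((1 + x^2)/2))"
      using assms(2) by (intro integrable_mult_right integrable_divide Bochner_Integration.integrable_add) auto
    fix x
    have "iexp (s*x) - iexp (s'*x) = iexp (s'*x) * (iexp ((s-s')*x) - 1)"
      by (simp add: algebra_simps flip: exp_add)
    then have "cmod (iexp (s*x) - iexp (s'*x)) = cmod (iexp ((s-s')*x) - 1)"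
      by (simp add: norm_mult)
    also have "\<dots> \<le> \<bar>(s-s')*x\<bar>"
      using iexp_approx1[of "(s-s')*x" 0] by simp
    also have "\<dots> = \<bar>s - s'\<bar> * \<bar>x\<bar>" by (simp add: abs_mult)
    also have "\<dots> \<le> \<bar>s - s'\<bar> * ((1 + x^2)/2)"
      by (rule mult_left_mono[OF abs_le_half_sq]) simp
    finally show "cmod (iexp (s*x) - iexp (s'*x)) \<le> \<bar>s - s'\<bar> * ((1 + x^2)/2)" .
  qed
  also have "\<dots> = \<bar>s - s'\<bar>"
    using assms(2,3) prob_space by (simp add: Bochner_Integration.integral_add)
  finally show ?thesis .
qed

lemma unif_conv_lip:
  fixes f :: "nat \<Rightarrow> real \<Rightarrow> complex" and g :: "real \<Rightarrow> complex"
  assumes pw: "\<And>s. ((\<lambda>n. f n s) \<longlongrightarrow> g s) F"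
    and lf: "\<forall>\<^sub>F n in F. \<forall>s s'. cmod (f n s - f n s') \<le> \<bar>s - s'\<bar>"
    and lg: "\<And>s s'. cmod (g s - g s') \<le> \<bar>s - s'\<bar>"
    and e: "e > 0"
  shows "\<forall>\<^sub>F n in F. \<forall>s. \<bar>s\<bar> \<le> T \<longrightarrow> cmod (f n s - g s) \<le> e"
proof -
  define d where "d = e / 3"
  have d: "d > 0" using e by (simp add: d_def)
  define N where "N = nat \<lceil>2 * T / d\<rceil>"
  define G where "G = (\<lambda>j. - T + real j * d) ` {..N}"
  have "finite G" by (simp add: G_def)
  have "\<forall>\<^sub>F n in F. \<forall>p\<in>G. cmod (f n p - g p) < d"
  proof (rule eventually_ball_finite[OF \<open>finite G\<close>], rule ballI)
    fix p
    have "((\<lambda>n. f n p - g p) \<longlongrightarrow> 0) F"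
      using pw[of p] by (simp add: tendsto_diff[OF _ tendsto_const, of _ "g p" _ "g p", simplified] LIM_zero)
    then show "\<forall>\<^sub>F n in F. cmod (f n p - g p) < d"
      using d by (auto simp: tendsto_iff dist_norm)
  qed
  then show ?thesis using lf
  proof eventually_elim
    case (elim n)
    show ?case
    proof (intro allI impI)
      fix s :: real assume s: "\<bar>s\<bar> \<le> T"
      define j where "j = nat \<lfloor>(s + T) / d\<rfloor>"
      define p where "p = - T + real j * d"
      have st: "0 \<le> (s + T) / d" using s d by auto
      have j1: "real j \<le> (s + T) / d" and j2: "(s + T) / d < real j + 1"
        using st by (simp_all add: j_def)
      have "real j * d \<le> s + T" using j1 d by (simp add: field_simps)
      moreover have "s + T < (real j + 1) * d" using j2 d by (simp add: field_simps)
      ultimately have ps: "\<bar>s - p\<bar> \<le> d" by (simp add: p_def algebra_simps)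
      have "(s + T) / d \<le> 2 * T / d" using s d by (simp add: divide_right_mono)
      then have "\<lfloor>(s + T) / d\<rfloor> \<le> \<lceil>2 * T / d\<rceil>"
        by (meson floor_le_ceiling floor_mono order_trans)
      then have "j \<le> N" unfolding j_def N_def by (rule nat_mono)
      then have "p \<in> G" unfolding G_def p_def by (intro imageI) simp
      then have 1: "cmod (f n p - g p) < d" using elim by blast
      have 2: "cmod (f n s - f n p) \<le> d" using elim(2) ps by (meson order_trans)
      have 3: "cmod (g p - g s) \<le> d" using lg[of p s] ps by (simp add: abs_minus_commute)
      have "f n s - g s = (f n s - f n p) + (f n p - g p) + (g p - g s)" by simp
      then have "cmod (f n s - g s) \<le> cmod (f n s - f n p) + cmod (f n p - g p) + cmod (g p - g s)"
        by (metis norm_triangle_ineq order_trans add_right_mono)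
      also have "\<dots> \<le> 3 * d" using 1 2 3 by simp
      finally show "cmod (f n s - g s) \<le> e" by (simp add: d_def)
    qed
  qed
qed

lemma std_normal_facts:
  "real_distribution std_normal_distribution"
  "integrable std_normal_distribution (\<lambda>x. x)"
  "integrable std_normal_distribution (\<lambda>x. x^2)"
  "(\<integral>x. x \<partial>std_normal_distribution) = 0"
  "(\<integral>x. x^2 \<partial>std_normal_distribution) = 1"
proof -
  show "real_distribution std_normal_distribution" by (rule real_dist_normal_dist)
  show "integrable std_normal_distribution (\<lambda>x. x)"
    using integrable_std_normal_distribution_moment[of 1] by simp
  show "integrable std_normal_distribution (\<lambda>x. x^2)"
    using integrable_std_normal_distribution_moment[of 2] by simp
  show "(\<integral>x. x \<partial>std_normal_distribution) = 0"
    using integral_std_normal_distribution_moment_odd[of 1] by simp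
  show "(\<integral>x. x^2 \<partial>std_normal_distribution) = 1"
    using std_normal_distribution_even_moments(1)[of 1] by simp
qed

lemma var_facts:
  assumes P: "prob_space M" and I1: "integrable M X" and I2: "integrable M (\<lambda>x. (X x)\<^sup>2)"
    and E: "prob_space.expectation M X = 0" and V: "prob_space.variance M X = 1"
  shows "real_distribution (distr M borel X)"
    "integrable (distr M borel X) (\<lambda>x. x)"
    "integrable (distr M borel X) (\<lambda>x. x^2)"
    "(\<integral>x. x \<partial>distr M borel X) = 0"
    "(\<integral>x. x^2 \<partial>distr M borel X) = 1"
proof -
  interpret prob_space M by (rule P)
  have [measurable]: "X \<in> borel_measurable M" using I1 by (rule borel_measurable_integrable)
  show "real_distribution (distr M borel X)" by simp
  show "integrable (distr M borel X) (\<lambda>x. x)" using I1 by (simp add: integrable_distr_eq)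
  show "integrable (distr M borel X) (\<lambda>x. x^2)" using I2 by (simp add: integrable_distr_eq)
  show "(\<integral>x. x \<partial>distr M borel X) = 0" using E by (simp add: integral_distr)
  show "(\<integral>x. x^2 \<partial>distr M borel X) = 1" using V E by (simp add: integral_distr)
qed


theorem lemma4p4:
  fixes M :: "nat \<Rightarrow> 'a measure"
    and k :: "nat \<Rightarrow> nat"
    and X :: "nat \<Rightarrow> nat \<Rightarrow> 'a \<Rightarrow> real"
    and a :: "nat \<Rightarrow> nat \<Rightarrow> real"
  assumes prob: "\<And>n. prob_space (M n)"
    and indep: "\<And>n. prob_space.indep_vars (M n) (\<lambda>i. borel) (X n) {1..k n}"
    and integrable: "\<And>n i. i \<in> {1..k n} \<Longrightarrow> integrable (M n) (X n i)"
    and sq_integrable: "\<And>n i. i \<in> {1..k n} \<Longrightarrow> integrable (M n) (\<lambda>x. (X n i x)\<^sup>2)"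
    and centred: "\<And>n i. i \<in> {1..k n} \<Longrightarrow> prob_space.expectation (M n) (X n i) = 0"
    and variance: "\<And>n i. i \<in> {1..k n} \<Longrightarrow> prob_space.variance (M n) (X n i) = 1"
    and a_nonneg: "\<And>n i. i \<in> {1..k n} \<Longrightarrow> a n i \<ge> 0"
    and a_norm: "\<And>n. (\<Sum>i=1..k n. (a n i)\<^sup>2) = 1"
    and conv: "\<And>i. i \<ge> 1 \<Longrightarrow>
       weak_conv_m_within (\<lambda>n. distr (M n) borel (X n i)) std_normal_distribution {n. i \<le> k n}"
    and tail: "((\<lambda>j. SUP n. (\<Sum>i=j..k n. (a n i)\<^sup>2)) \<longlongrightarrow> 0) sequentially"
  shows "weak_conv_m (\<lambda>n. distr (M n) borel (\<lambda>x. \<Sum>i=1..k n. a n i * X n i x))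
           std_normal_distribution"
proof -
  interpret Mn: prob_space "M n" for n by (rule prob)
  define g where "g s = complex_of_real (exp (- (s^2) / 2))" for s
  define \<phi> where "\<phi> n i s = char (distr (M n) borel (X n i)) s" for n i s
  have gchar: "char std_normal_distribution = g"
    unfolding g_def by (rule char_std_normal_distribution)
  have meas[measurable]: "X n i \<in> borel_measurable (M n)" if "i \<in> {1..k n}" for n i
    using integrable[OF that] by (rule borel_measurable_integrable)
  have vf1: "real_distribution (distr (M n) borel (X n i))" if "i \<in> {1..k n}" for n i
    by (rule var_facts(1)[OF prob integrable[OF that] sq_integrable[OF that] centred[OF that] variance[OF that]])
  have vf2: "integrable (distr (M n) borel (X n i)) (\<lambda>x. x)" if "i \<in> {1..k n}" for n i
    by (rule var_facts(2)[OF prob integrable[OF that] sq_integrable[OF that] centred[OF that] variance[OF that]])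
  have vf3: "integrable (distr (M n) borel (X n i)) (\<lambda>x. x^2)" if "i \<in> {1..k n}" for n i
    by (rule var_facts(3)[OF prob integrable[OF that] sq_integrable[OF that] centred[OF that] variance[OF that]])
  have vf4: "(\<integral>x. x \<partial>distr (M n) borel (X n i)) = 0" if "i \<in> {1..k n}" for n i
    by (rule var_facts(4)[OF prob integrable[OF that] sq_integrable[OF that] centred[OF that] variance[OF that]])
  have vf5: "(\<integral>x. x^2 \<partial>distr (M n) borel (X n i)) = 1" if "i \<in> {1..k n}" for n i
    by (rule var_facts(5)[OF prob integrable[OF that] sq_integrable[OF that] centred[OF that] variance[OF that]])

  have lipphi: "cmod (\<phi> n i s - \<phi> n i s') \<le> \<bar>s - s'\<bar>" if "i \<in> {1..k n}" for n i s s'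
    unfolding \<phi>_def using char_lipschitz[OF vf1[OF that] vf3[OF that] vf5[OF that]] .
  have lipg: "cmod (g s - g s') \<le> \<bar>s - s'\<bar>" for s s'
    using char_lipschitz[OF std_normal_facts(1,3,5)] gchar by simp
  have quad: "cmod (\<phi> n i s - g s) \<le> 2 * s^2" if "i \<in> {1..k n}" for n i s
  proof -
    have "cmod (\<phi> n i s - (1 - s^2/2)) \<le> s^2"
      unfolding \<phi>_def using char_quad_bound[OF vf1[OF that] vf2[OF that] vf3[OF that] vf4[OF that] vf5[OF that]] by simp
    moreover have "cmod (g s - (1 - s^2/2)) \<le> s^2"
      using char_quad_bound[OF std_normal_facts] gchar by simp
    moreover have "\<phi> n i s - g s = (\<phi> n i s - (1 - s^2/2)) - (g s - (1 - s^2/2))" by simp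
    then have "cmod (\<phi> n i s - g s) \<le> cmod (\<phi> n i s - (1 - s^2/2)) + cmod (g s - (1 - s^2/2))"
      using norm_triangle_ineq4 by metis
    ultimately show ?thesis by linarith
  qed
  have a_le1: "a n i \<le> 1" if "i \<in> {1..k n}" for n i
  proof (rule ccontr)
    assume "\<not> a n i \<le> 1"
    then have "1 * 1 < a n i * a n i" by (intro mult_strict_mono) auto
    moreover have "(a n i)^2 \<le> (\<Sum>i=1..k n. (a n i)\<^sup>2)"
      by (rule member_le_sum) (use that in auto)
    ultimately show False using a_norm[of n] by (simp add: power2_eq_square)
  qed
  have charsum: "char (distr (M n) borel (\<lambda>x. \<Sum>i=1..k n. a n i * X n i x)) t
      = (\<Prod>i\<in>{1..k n}. \<phi> n i (a n i * t))" for n t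
  proof -
    have ind: "Mn.indep_vars n (\<lambda>i. borel) (\<lambda>i x. a n i * X n i x) {1..k n}"
      by (rule Mn.indep_vars_compose2[OF indep]) auto
    have "char (distr (M n) borel (\<lambda>x. \<Sum>i=1..k n. a n i * X n i x)) t
       = (\<Prod>i\<in>{1..k n}. char (distr (M n) borel (\<lambda>x. a n i * X n i x)) t)"
      by (rule Mn.char_distr_sum[OF ind])
    also have "\<dots> = (\<Prod>i\<in>{1..k n}. \<phi> n i (a n i * t))"
    proof (rule prod.cong[OF refl])
      fix i assume i: "i \<in> {1..k n}"
      note [measurable] = meas[OF i]
      show "char (distr (M n) borel (\<lambda>x. a n i * X n i x)) t = \<phi> n i (a n i * t)"
        unfolding \<phi>_def char_def by (simp add: integral_distr ac_simps)
    qed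
    finally show ?thesis .
  qed
  have gprod: "g t = (\<Prod>i\<in>{1..k n}. g (a n i * t))" for n t
  proof -
    have "(\<Prod>i\<in>{1..k n}. g (a n i * t)) = complex_of_real (exp (\<Sum>i\<in>{1..k n}. - ((a n i * t)^2) / 2))"
      unfolding g_def by (simp add: exp_sum)
    also have "(\<Sum>i\<in>{1..k n}. - ((a n i * t)^2) / 2) = - (t^2) / 2 * (\<Sum>i=1..k n. (a n i)\<^sup>2)"
      by (simp add: sum_distrib_left power_mult_distrib sum_divide_distrib algebra_simps flip: sum_negf)
    finally show ?thesis using a_norm[of n] by (simp add: g_def)
  qed
  have diffb: "cmod (char (distr (M n) borel (\<lambda>x. \<Sum>i=1..k n. a n i * X n i x)) t - g t)
     \<le> (\<Sum>i\<in>{1..k n}. cmod (\<phi> n i (a n i * t) - g (a n i * t)))" for n t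
    unfolding charsum gprod[of t n]
  proof (rule norm_prod_diff)
    fix i assume "i \<in> {1..k n}"
    then show "cmod (\<phi> n i (a n i * t)) \<le> 1"
      unfolding \<phi>_def using real_distribution.cmod_char_le_1[OF vf1] by blast
  next
    fix i show "cmod (g (a n i * t)) \<le> 1" by (simp add: g_def)
  qed
  have conv_i: "((\<lambda>n. \<phi> n i s) \<longlongrightarrow> g s) (sequentially \<sqinter> principal {n. i \<le> k n})"
    if "i \<ge> 1" for i s
    unfolding \<phi>_def gchar[symmetric]
    by (rule within_char_conv[OF _ std_normal_facts(1) conv[OF that]]) (use that vf1 in auto)
  show ?thesis
  proof (rule levy_continuity)
    show "real_distribution (distr (M n) borel (\<lambda>x. \<Sum>i=1..k n. a n i * X n i x))" for n
      by (rule Mn.real_distribution_distr) (auto intro!: borel_measurable_sum)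
    show "real_distribution std_normal_distribution" by (rule std_normal_facts)
    fix t :: real
    show "(\<lambda>n. char (distr (M n) borel (\<lambda>x. \<Sum>i=1..k n. a n i * X n i x)) t)
      \<longlonglongrightarrow> char std_normal_distribution t"
      unfolding gchar tendsto_iff dist_norm
    proof (intro allI impI)
      fix e :: real assume e: "e > 0"
      define \<tau> where "\<tau> j = (SUP n. (\<Sum>i=j..k n. (a n i)\<^sup>2))" for j
      define c where "c = e / (2 * (2 * t^2 + 1))"
      have c: "c > 0" unfolding c_def using e
        by (intro divide_pos_pos mult_pos_pos) (auto intro: add_nonneg_pos)
      obtain j0 where j0: "\<And>j. j \<ge> j0 \<Longrightarrow> \<bar>\<tau> j\<bar> < c"
        using tail c unfolding tendsto_iff dist_real_def \<tau>_def eventually_sequentially by force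
      define j where "j = max j0 1"
      have j1: "j \<ge> 1" and tj: "\<tau> j < c" using j0[of j] by (auto simp: j_def)
      have tailsum: "(\<Sum>i=j..k n. (a n i)\<^sup>2) \<le> \<tau> j" for n
      proof -
        have "(\<Sum>i=j..k n. (a n i)\<^sup>2) \<le> 1" for n
          unfolding a_norm[of n, symmetric] using j1 by (intro sum_mono2) auto
        then have "bdd_above (range (\<lambda>n. \<Sum>i=j..k n. (a n i)\<^sup>2))" by (auto intro!: bdd_aboveI2)
        then show ?thesis unfolding \<tau>_def by (rule cSUP_upper[OF UNIV_I])
      qed
      define d where "d = e / (2 * real j)"
      have d: "d > 0" using e j1 by (simp add: d_def)
      have ev: "\<forall>\<^sub>F n in sequentially. \<forall>i\<in>{1..<j}. i \<le> k n \<longrightarrow> (\<forall>s. \<bar>s\<bar> \<le> \<bar>t\<bar> \<longrightarrow> cmod (\<phi> n i s - g s) \<le> d)"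
      proof (rule eventually_ball_finite, simp, rule ballI)
        fix i assume i: "i \<in> {1..<j}"
        have "\<forall>\<^sub>F n in sequentially \<sqinter> principal {n. i \<le> k n}. \<forall>s. \<bar>s\<bar> \<le> \<bar>t\<bar> \<longrightarrow> cmod (\<phi> n i s - g s) \<le> d"
        proof (rule unif_conv_lip[OF conv_i _ lipg d])
          show "1 \<le> i" using i by simp
          show "\<forall>\<^sub>F n in sequentially \<sqinter> principal {n. i \<le> k n}. \<forall>s s'. cmod (\<phi> n i s - \<phi> n i s') \<le> \<bar>s - s'\<bar>"
            unfolding eventually_inf_principal using i by (auto intro!: always_eventually lipphi)
        qed
        then show "\<forall>\<^sub>F n in sequentially. i \<le> k n \<longrightarrow> (\<forall>s. \<bar>s\<bar> \<le> \<bar>t\<bar> \<longrightarrow> cmod (\<phi> n i s - g s) \<le> d)"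
          unfolding eventually_inf_principal by simp
      qed
      show "\<forall>\<^sub>F n in sequentially. cmod (char (distr (M n) borel (\<lambda>x. \<Sum>i=1..k n. a n i * X n i x)) t - g t) < e"
        using ev
      proof eventually_elim
        case (elim n)
        let ?h = "\<lambda>i. cmod (\<phi> n i (a n i * t) - g (a n i * t))"
        have split: "(\<Sum>i\<in>{1..k n}. ?h i) = (\<Sum>i\<in>{1..k n} \<inter> {..<j}. ?h i) + (\<Sum>i\<in>{j..k n}. ?h i)"
        proof -
          have "{1..k n} - {..<j} = {j..k n}" using j1 by auto
          then show ?thesis using sum.Int_Diff[of "{1..k n}" ?h "{..<j}"] by simp
        qed
        have head: "(\<Sum>i\<in>{1..k n} \<inter> {..<j}. ?h i) \<le> e / 2"
        proof -
          have "(\<Sum>i\<in>{1..k n} \<inter> {..<j}. ?h i) \<le> (\<Sum>i\<in>{1..k n} \<inter> {..<j}. d)"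
          proof (rule sum_mono)
            fix i assume i: "i \<in> {1..k n} \<inter> {..<j}"
            have "\<bar>a n i * t\<bar> = a n i * \<bar>t\<bar>" using a_nonneg i by (simp add: abs_mult)
            also have "\<dots> \<le> \<bar>t\<bar>" using a_le1 a_nonneg i by (intro mult_left_le_one_le) auto
            finally show "?h i \<le> d" using elim i by auto
          qed
          also have "\<dots> = real (card ({1..k n} \<inter> {..<j})) * d" by simp
          also have "\<dots> \<le> real j * d"
            using card_mono[of "{..<j}" "{1..k n} \<inter> {..<j}"] d by (intro mult_right_mono) auto
          also have "\<dots> = e / 2" using j1 by (simp add: d_def)
          finally show ?thesis .
        qed
        have tl: "(\<Sum>i\<in>{j..k n}. ?h i) < e / 2"
        proof -
          have "(\<Sum>i\<in>{j..k n}. ?h i) \<le> (\<Sum>i\<in>{j..k n}. 2 * (a n i * t)^2)"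
            using j1 by (intro sum_mono quad) auto
          also have "\<dots> = 2 * t^2 * (\<Sum>i=j..k n. (a n i)\<^sup>2)"
            by (simp add: sum_distrib_left power_mult_distrib algebra_simps)
          also have "\<dots> \<le> 2 * t^2 * c"
            using tailsum[of n] tj by (intro mult_left_mono) auto
          also have "\<dots> < e / 2"
          proof -
            have p: "0 < 2*t^2+(1::real)" using zero_le_power2[of t] by linarith
            have "2*t^2*c = (e/2) * (2*t^2/(2*t^2+1))" unfolding c_def using p by (simp add: field_simps)
            also have "\<dots> < (e/2) * 1" using p e by (intro mult_strict_left_mono) auto
            finally show ?thesis by simp
          qed
          finally show ?thesis .
        qed
        show ?case using diffb[of n t] split head tl by linarith
      qed
    qed
  qed
qed

end
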